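(* Let $\eta\in\mathbb{C}$, $M\ge 1$, and let $T^\alpha_\beta(u)=\sum_{m=0}^M u^m T^\alpha_{\beta,m}$ ($\alpha,\beta\in\{1,2,3\}$) be operator-valued polynomials acting on a linear space $W$ whose coefficients satisfy, for all $u,v$ and all indices, $$(u-v)T^{\alpha_1}_{\beta_1}(u)T^{\alpha_2}_{\beta_2}(v)+\eta\, T^{\alpha_2}_{\beta_1}(u)T^{\alpha_1}_{\beta_2}(v)=(u-v)T^{\alpha_2}_{\beta_2}(v)T^{\alpha_1}_{\beta_1}(u)+\eta\, T^{\alpha_2}_{\beta_1}(v)T^{\alpha_1}_{\beta_2}(u).$$ Let $U(u)$ be the matrix of quantum minors defined in the context, and for a complex parameter $c$ put $$B_c(u)=T^{2}_{3}(u)\,U^{3}_{1}(u-c)-T^{1}_{3}(u)\,U^{3}_{2}(u-c).$$ Then for every $c$ the operators $B_c(u)$ form a commutative family: $[B_c(u),B_c(v)]=0$ for all $u,v$.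
   Context: For $\alpha_1<\alpha_2$, $\beta_1<\beta_2$ the quantum minor is $T^{\alpha_1\alpha_2}_{\beta_1\beta_2}(u)=T^{\alpha_1}_{\beta_1}(u)T^{\alpha_2}_{\beta_2}(u+\eta)-T^{\alpha_2}_{\beta_1}(u)T^{\alpha_1}_{\beta_2}(u+\eta)$. The $3\times 3$ matrix $U(u)=(U^\alpha_\beta(u))$ is $$U(u)=\begin{pmatrix} T^{23}_{23}(u) & -T^{23}_{13}(u) & T^{23}_{12}(u)\\ -T^{13}_{23}(u) & T^{13}_{13}(u) & -T^{13}_{12}(u)\\ T^{12}_{23}(u) & -T^{12}_{13}(u) & T^{12}_{12}(u)\end{pmatrix},$$ so in particular $U^3_1(u)=T^{12}_{23}(u)$ and $U^3_2(u)=-T^{12}_{13}(u)$. *)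

theory Defs
  imports Complex_Main
begin

text \<open>W is a complex vector space: a type 'w with addition and a complex scalar
multiplication sc satisfying the vector space axioms (locale vector_space).\<close>

definition Tpoly ::
  "(complex \<Rightarrow> 'w \<Rightarrow> 'w::ab_group_add) \<Rightarrow> (nat \<Rightarrow> nat \<Rightarrow> nat \<Rightarrow> 'w \<Rightarrow> 'w) \<Rightarrow> nat
   \<Rightarrow> nat \<Rightarrow> nat \<Rightarrow> complex \<Rightarrow> 'w \<Rightarrow> 'w" where
  "Tpoly sc Tc M a b u = (\<lambda>w. \<Sum>m\<le>M. sc (u ^ m) (Tc a b m w))"

definition qminor ::
  "(complex \<Rightarrow> 'w \<Rightarrow> 'w::ab_group_add) \<Rightarrow> (nat \<Rightarrow> nat \<Rightarrow> nat \<Rightarrow> 'w \<Rightarrow> 'w) \<Rightarrow> nat \<Rightarrow> complex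
   \<Rightarrow> nat \<Rightarrow> nat \<Rightarrow> nat \<Rightarrow> nat \<Rightarrow> complex \<Rightarrow> 'w \<Rightarrow> 'w" where
  "qminor sc Tc M eta a1 a2 b1 b2 u =
     (\<lambda>w. Tpoly sc Tc M a1 b1 u (Tpoly sc Tc M a2 b2 (u + eta) w)
         - Tpoly sc Tc M a2 b1 u (Tpoly sc Tc M a1 b2 (u + eta) w))"

definition U31 where "U31 sc Tc M eta u = qminor sc Tc M eta 1 2 2 3 u"
definition U32 where "U32 sc Tc M eta u = (\<lambda>w. - qminor sc Tc M eta 1 2 1 3 u w)"

definition Bop where
  "Bop sc Tc M eta c u =
     (\<lambda>w. Tpoly sc Tc M 2 3 u (U31 sc Tc M eta (u - c) w)
         - Tpoly sc Tc M 1 3 u (U32 sc Tc M eta (u - c) w))"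

end

theory Submission
  imports Defs
begin


type_synonym letter = "nat \<times> nat \<times> nat"

definition slc :: "('l list \<Rightarrow> complex) \<Rightarrow> (complex \<times> 'l list) list \<Rightarrow> complex" where
  "slc y xs = sum_list (map (\<lambda>(c,l). c * y l) xs)"

definition wrap :: "'l list \<Rightarrow> 'l list \<Rightarrow> complex \<Rightarrow> (complex \<times> 'l list) list \<Rightarrow> (complex \<times> 'l list) list" where
  "wrap L R k xs = map (\<lambda>(c,l). (k * c, L @ l @ R)) xs"

definition negf :: "(complex \<times> 'l list) list \<Rightarrow> (complex \<times> 'l list) list" where
  "negf xs = map (\<lambda>(c,l). (- c, l)) xs"

locale rttA =
  fixes sc :: "complex \<Rightarrow> 'w::ab_group_add \<Rightarrow> 'w"
    and Tc :: "nat \<Rightarrow> nat \<Rightarrow> nat \<Rightarrow> 'w \<Rightarrow> 'w"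
    and M :: nat and eta :: complex
  assumes vs: "vector_space sc"
    and lin: "\<And>a b m. a \<in> {1,2,3} \<Longrightarrow> b \<in> {1,2,3} \<Longrightarrow> m \<le> M \<Longrightarrow>
                Vector_Spaces.linear sc sc (Tc a b m)"
    and RTT: "\<And>u v a1 a2 b1 b2 w. a1 \<in> {1,2,3} \<Longrightarrow> a2 \<in> {1,2,3} \<Longrightarrow>
                b1 \<in> {1,2,3} \<Longrightarrow> b2 \<in> {1,2,3} \<Longrightarrow>
        sc (u - v) (Tpoly sc Tc M a1 b1 u (Tpoly sc Tc M a2 b2 v w))
      + sc eta (Tpoly sc Tc M a2 b1 u (Tpoly sc Tc M a1 b2 v w))
      = sc (u - v) (Tpoly sc Tc M a2 b2 v (Tpoly sc Tc M a1 b1 u w))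
      + sc eta (Tpoly sc Tc M a2 b1 v (Tpoly sc Tc M a1 b2 u w))"
begin

interpretation V: vector_space sc by (rule vs)

abbreviation T where "T a b x \<equiv> Tpoly sc Tc M a b x"

definition lin_op :: "('w \<Rightarrow> 'w) \<Rightarrow> bool" where
  "lin_op f \<longleftrightarrow> (\<forall>p q. f (p + q) = f p + f q) \<and> (\<forall>c p. f (sc c p) = sc c (f p))"

lemma lin_opD: assumes "lin_op f"
  shows "f (p + q) = f p + f q" "f (sc c p) = sc c (f p)" "f 0 = 0" "f (- p) = - f p"
    "f (p - q) = f p - f q"
proof -
  show a: "f (p + q) = f p + f q" for p q using assms by (simp add: lin_op_def)
  show s: "f (sc c p) = sc c (f p)" for c p using assms by (simp add: lin_op_def)
  show z: "f 0 = 0" using s[of 0 0] by simp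
  show n: "f (- p) = - f p" for p using s[of "-1" p] by simp
  have "f (p - q) = f (p + - q)" by (simp only: diff_conv_add_uminus)
  also have "\<dots> = f p + - f q" by (simp only: a n)
  finally show "f (p - q) = f p - f q" by (simp only: diff_conv_add_uminus)
qed

lemma lin_op_sum: "lin_op f \<Longrightarrow> f (sum g A) = (\<Sum>a\<in>A. f (g a))"
  by (induction A rule: infinite_finite_induct) (auto simp: lin_opD)

lemma lin_op_sum_list: "lin_op f \<Longrightarrow> f (sum_list xs) = sum_list (map f xs)"
  by (induction xs) (auto simp: lin_opD)

lemma lin_op_comp: "lin_op f \<Longrightarrow> lin_op g \<Longrightarrow> lin_op (\<lambda>p. f (g p))"
  by (simp add: lin_op_def)

lemma lin_op_minus: "lin_op f \<Longrightarrow> lin_op g \<Longrightarrow> lin_op (\<lambda>p. f p - g p)"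
  by (simp add: lin_op_def algebra_simps)
lemma lin_op_plus: "lin_op f \<Longrightarrow> lin_op g \<Longrightarrow> lin_op (\<lambda>p. f p + g p)"
  by (simp add: lin_op_def algebra_simps)
lemma lin_op_uminus: "lin_op f \<Longrightarrow> lin_op (\<lambda>p. - f p)"
  by (simp add: lin_op_def algebra_simps)

lemma Tc_lin: assumes "a \<in> {1,2,3}" "b \<in> {1,2,3}" "m \<le> M" shows "lin_op (Tc a b m)"
proof -
  have "Vector_Spaces.linear sc sc (Tc a b m)" using lin assms by blast
  then show ?thesis unfolding Vector_Spaces.linear_iff lin_op_def by blast
qed

lemma T_lin: assumes "a \<in> {1,2,3}" "b \<in> {1,2,3}" shows "lin_op (T a b x)"
proof -
  have add: "T a b x (p+q) = T a b x p + T a b x q" for p q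
  proof -
    have "T a b x (p+q) = (\<Sum>m\<le>M. sc (x^m) (Tc a b m p) + sc (x^m) (Tc a b m q))"
      unfolding Tpoly_def by (rule sum.cong) (use Tc_lin[OF assms] in \<open>auto simp: lin_opD V.scale_right_distrib\<close>)
    then show ?thesis by (simp add: Tpoly_def sum.distrib)
  qed
  have sc: "T a b x (sc c p) = sc c (T a b x p)" for c p
  proof -
    have "T a b x (sc c p) = (\<Sum>m\<le>M. sc c (sc (x^m) (Tc a b m p)))"
      unfolding Tpoly_def by (rule sum.cong) (use Tc_lin[OF assms] in \<open>auto simp: lin_opD mult.commute\<close>)
    then show ?thesis by (simp add: Tpoly_def V.scale_sum_right)
  qed
  show ?thesis using add sc by (simp add: lin_op_def)
qed

fun evs :: "('l \<Rightarrow> 'w \<Rightarrow> 'w) \<Rightarrow> 'l list \<Rightarrow> 'w \<Rightarrow> 'w" where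
  "evs s [] p = p"
| "evs s (l#ls) p = s l (evs s ls p)"

lemma evs_append: "evs s (xs @ ys) p = evs s xs (evs s ys p)"
  by (induction xs) auto

lemma evs_lin: "list_all (\<lambda>l. lin_op (s l)) ls \<Longrightarrow> lin_op (evs s ls)"
proof (induction ls)
  case Nil then show ?case by (simp add: lin_op_def)
next
  case (Cons l ls) then show ?case using lin_op_comp[of "s l" "evs s ls"] by simp
qed

definition lcs :: "('l \<Rightarrow> 'w \<Rightarrow> 'w) \<Rightarrow> (complex \<times> 'l list) list \<Rightarrow> 'w \<Rightarrow> 'w" where
  "lcs s xs p = sum_list (map (\<lambda>(c,l). sc c (evs s l p)) xs)"

lemma lcs_simps: "lcs s [] p = 0" "lcs s ((c,l)#xs) p = sc c (evs s l p) + lcs s xs p"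
  by (simp_all add: lcs_def)

lemma lcs_append: "lcs s (xs @ ys) p = lcs s xs p + lcs s ys p"
  by (simp add: lcs_def)

lemma lcs_negf: "lcs s (negf xs) p = - lcs s xs p"
  by (induction xs) (auto simp: lcs_def negf_def)

lemma lcs_wrap: assumes "list_all (\<lambda>l. lin_op (s l)) L"
  shows "lcs s (wrap L R k xs) p = sc k (evs s L (lcs s xs (evs s R p)))"
proof (induction xs)
  case Nil then show ?case using lin_opD(3)[OF evs_lin[OF assms]] by (simp add: lcs_def wrap_def)
next
  case (Cons x xs)
  obtain c l where x: "x = (c,l)" by force
  from Cons show ?case using lin_opD[OF evs_lin[OF assms]]
    by (simp add: x lcs_def wrap_def evs_append V.scale_right_distrib)
qed

lemma lcs_zero_formal:
  assumes "\<And>y. slc y xs = 0"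
  shows "lcs s xs p = 0"
proof -
  define cf where "cf l = slc (\<lambda>l'. if l' = l then 1 else 0) xs" for l
  have cf0: "cf l = 0" for l using assms cf_def by simp
  have gen: "finite S \<Longrightarrow> set (map snd ys) \<subseteq> S \<Longrightarrow>
     sum_list (map (\<lambda>(c,l). sc c (evs s l p)) ys) =
     (\<Sum>l\<in>S. sc (slc (\<lambda>l'. if l' = l then 1 else 0) ys) (evs s l p))" for S ys
  proof (induction ys)
    case Nil then show ?case by (simp add: slc_def)
  next
    case (Cons q ys)
    obtain c l0 where q: "q = (c,l0)" by force
    have l0: "l0 \<in> S" using Cons.prems q by auto
    have "(\<Sum>l\<in>S. sc (slc (\<lambda>l'. if l' = l then 1 else 0) (q#ys)) (evs s l p))
        = (\<Sum>l\<in>S. sc (c * (if l0 = l then 1 else 0)) (evs s l p)) + (\<Sum>l\<in>S. sc (slc (\<lambda>l'. if l' = l then 1 else 0) ys) (evs s l p))"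
      by (simp add: q slc_def V.scale_left_distrib sum.distrib)
    also have "(\<Sum>l\<in>S. sc (c * (if l0 = l then 1 else 0)) (evs s l p)) = (\<Sum>l\<in>S. if l0 = l then sc c (evs s l p) else 0)"
      by (rule sum.cong) auto
    also have "\<dots> = sc c (evs s l0 p)"
      using Cons.prems(1) l0 by (simp add: sum.delta)
    finally show ?case using Cons by (simp add: q)
  qed
  have "lcs s xs p = (\<Sum>l\<in>set (map snd xs). sc (cf l) (evs s l p))"
    unfolding lcs_def cf_def by (rule gen) auto
  then show ?thesis by (simp add: cf0)
qed

lemma cert_gen:
  assumes "list_all (\<lambda>(L,R,k,F). list_all (\<lambda>l. lin_op (s l)) L \<and> (\<forall>v. lcs s F v = 0)) Is"
    and "\<And>y. slc y (concat (map (\<lambda>(L,R,k,F). wrap L R k F) Is) @ negf tgt) = 0"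
  shows "lcs s tgt p = 0"
proof -
  have z: "lcs s (concat (map (\<lambda>(L,R,k,F). wrap L R k F) Is)) p = 0"
    using assms(1)
  proof (induction Is)
    case Nil then show ?case by (simp add: lcs_def)
  next
    case (Cons I Is)
    obtain L R k F where I: "I = (L,R,k,F)" by (cases I) auto
    have L: "list_all (\<lambda>l. lin_op (s l)) L" and F: "lcs s F (evs s R p) = 0"
      using Cons.prems I by auto
    have "lcs s (wrap L R k F) p = 0"
      using lin_opD(3)[OF evs_lin[OF L]] by (simp add: lcs_wrap[OF L] F)
    then show ?case using Cons by (simp add: I lcs_append)
  qed
  have "lcs s (concat (map (\<lambda>(L,R,k,F). wrap L R k F) Is) @ negf tgt) p = 0"
    by (rule lcs_zero_formal) (rule assms(2))
  then show ?thesis using z by (simp add: lcs_append lcs_negf)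
qed

definition semT :: "(nat \<Rightarrow> complex) \<Rightarrow> letter \<Rightarrow> 'w \<Rightarrow> 'w" where
  "semT env l = (case l of (a,b,k) \<Rightarrow> T a b (env k))"

lemma semT_simp[simp]: "semT env (a,b,k) = T a b (env k)"
  by (simp add: semT_def)

lemma lin_op_semT[simp]: "a \<in> {1,2,3} \<Longrightarrow> b \<in> {1,2,3} \<Longrightarrow> lin_op (semT env (a,b,k))"
  by (simp add: T_lin)

definition rtt :: "(nat \<Rightarrow> complex) \<Rightarrow> nat \<Rightarrow> nat \<Rightarrow> nat \<Rightarrow> nat \<Rightarrow> nat \<Rightarrow> nat \<Rightarrow> (complex \<times> letter list) list" where
  "rtt env a1 a2 b1 b2 i j = [(env i - env j, [(a1,b1,i),(a2,b2,j)]), (eta, [(a2,b1,i),(a1,b2,j)]),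
     (-(env i - env j), [(a2,b2,j),(a1,b1,i)]), (-eta, [(a2,b1,j),(a1,b2,i)])]"

lemma lcs_rtt[simp]: "a1 \<in> {1,2,3} \<Longrightarrow> a2 \<in> {1,2,3} \<Longrightarrow> b1 \<in> {1,2,3} \<Longrightarrow> b2 \<in> {1,2,3} \<Longrightarrow>
   lcs (semT env) (rtt env a1 a2 b1 b2 i j) w = 0"
  using RTT[of a1 a2 b1 b2 "env i" "env j" w]
  by (simp add: lcs_def rtt_def algebra_simps)

end



definition tl1 :: "nat \<Rightarrow> nat \<Rightarrow> nat \<Rightarrow> (complex \<times> letter list) list" where
  "tl1 a b k = [(1, [(a,b,k)])]"
definition mnr :: "nat \<Rightarrow> nat \<Rightarrow> nat \<Rightarrow> nat \<Rightarrow> (complex \<times> letter list) list" where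
  "mnr p q k k' = [(1, [(1,p,k),(2,q,k')]), (-1, [(2,p,k),(1,q,k')])]"
definition fmul :: "(complex \<times> 'l list) list \<Rightarrow> (complex \<times> 'l list) list \<Rightarrow> (complex \<times> 'l list) list" where
  "fmul xs ys = concat (map (\<lambda>(c1,l1). map (\<lambda>(c2,l2). (c1*c2, l1@l2)) ys) xs)"
definition fsc :: "complex \<Rightarrow> (complex \<times> 'l list) list \<Rightarrow> (complex \<times> 'l list) list" where
  "fsc k xs = map (\<lambda>(c,l). (k*c, l)) xs"

definition famA :: "nat \<Rightarrow> nat \<Rightarrow> nat \<Rightarrow> nat \<Rightarrow> nat \<Rightarrow> nat \<Rightarrow> (complex \<times> letter list) list" where
  "famA a e b kx ky ky' = fmul (tl1 a e kx) (mnr b 3 ky ky') @ negf (fmul (mnr b 3 ky ky') (tl1 a e kx))"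

context rttA begin

definition famAD :: "(nat \<Rightarrow> complex) \<Rightarrow> nat \<Rightarrow> nat \<Rightarrow> nat \<Rightarrow> nat \<Rightarrow> nat \<Rightarrow> nat \<Rightarrow> (complex \<times> letter list) list" where
  "famAD env a e b kx ky ky' = fsc (env kx - env ky - (if e = 3 then 0 else eta)) (famA a e b kx ky ky')"

definition famR3 :: "(nat \<Rightarrow> complex) \<Rightarrow> nat \<Rightarrow> nat \<Rightarrow> nat \<Rightarrow> nat \<Rightarrow> nat \<Rightarrow> nat \<Rightarrow> (complex \<times> letter list) list" where
  "famR3 env a p q kx ky ky' =
     fsc (-(env kx - env ky)) (fmul (tl1 a q kx) (mnr p 3 ky ky'))
   @ fsc (-(eta - (env kx - env ky))) (fmul (mnr p 3 ky ky') (tl1 a q kx))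
   @ fsc eta (fmul (tl1 a p kx) (mnr q 3 ky ky'))
   @ fsc eta (fmul (mnr p q ky ky') (tl1 a 3 kx))"

definition famR1 :: "(nat \<Rightarrow> complex) \<Rightarrow> nat \<Rightarrow> nat \<Rightarrow> nat \<Rightarrow> nat \<Rightarrow> nat \<Rightarrow> nat \<Rightarrow> (complex \<times> letter list) list" where
  "famR1 env a p q kx ky ky' = fsc (eta - (env kx - env ky))
     (fsc (-1) (fmul (tl1 a q kx) (mnr p 3 ky ky'))
   @ fmul (mnr p 3 ky ky') (tl1 a q kx)
   @ fsc (-1) (fmul (tl1 a p kx) (mnr q 3 ky ky'))
   @ fmul (mnr q 3 ky ky') (tl1 a p kx))"

lemma famAD_111:
  assumes e: "env ky' = env ky + eta"
  shows "lcs (semT env) (famAD env 1 1 1 kx ky ky') v = 0"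
  apply (rule cert_gen[where Is="[([],[(1,3,ky')],((-1)),rtt env 1 2 1 1 kx ky),
   ([],[(2,3,ky')],((1)),rtt env 1 1 1 1 ky kx),
   ([(1,1,ky)],[],((1)),rtt env 1 2 1 3 kx ky'),
   ([],[(1,3,ky')],((-1)),rtt env 1 2 1 1 ky kx),
   ([],[(1,3,kx)],((-1)),rtt env 1 2 1 1 ky ky'),
   ([],[(1,3,ky')],((1)),rtt env 2 1 1 1 kx ky),
   ([(2,1,ky)],[],((-1)),rtt env 1 1 1 3 kx ky')]"])
   apply (simp add: wrap_def T_lin)
  apply (simp add: slc_def wrap_def rtt_def negf_def fmul_def fsc_def mnr_def tl1_def famA_def famAD_def e)
  apply (simp add: algebra_simps)
  done

lemma famAD_131:
  assumes e: "env ky' = env ky + eta"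
  shows "lcs (semT env) (famAD env 1 3 1 kx ky ky') v = 0"
  apply (rule cert_gen[where Is="[([],[(2,3,ky')],((-1)),rtt env 1 1 1 3 kx ky),
   ([(1,1,kx)],[],((-1)),rtt env 1 2 3 3 ky ky'),
   ([(1,1,ky)],[],((-1)),rtt env 1 2 3 3 ky' kx),
   ([(1,1,ky)],[],((1)),rtt env 2 1 3 3 kx ky'),
   ([(1,1,ky)],[],((1)),rtt env 2 1 3 3 ky' kx),
   ([],[(2,3,ky')],((1)),rtt env 1 1 3 1 kx ky),
   ([],[(1,3,ky')],((-1)),rtt env 1 2 3 1 kx ky),
   ([],[(2,3,ky')],((1)),rtt env 1 1 3 1 ky kx),
   ([],[(1,3,ky')],((-1)),rtt env 1 2 3 1 ky kx),
   ([],[(1,3,ky')],((1)),rtt env 2 1 1 3 kx ky),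
   ([(2,1,ky)],[],((-1)),rtt env 1 1 3 3 kx ky')]"])
   apply (simp add: wrap_def T_lin)
  apply (simp add: slc_def wrap_def rtt_def negf_def fmul_def fsc_def mnr_def tl1_def famA_def famAD_def e)
  apply (simp add: algebra_simps)
  done

lemma famAD_122:
  assumes e: "env ky' = env ky + eta"
  shows "lcs (semT env) (famAD env 1 2 2 kx ky ky') v = 0"
  apply (rule cert_gen[where Is="[([],[(1,3,ky')],((-1)),rtt env 1 2 2 2 kx ky),
   ([],[(2,3,ky')],((1)),rtt env 1 1 2 2 ky kx),
   ([(1,2,ky)],[],((1)),rtt env 1 2 2 3 kx ky'),
   ([],[(1,3,ky')],((-1)),rtt env 1 2 2 2 ky kx),
   ([],[(1,3,kx)],((-1)),rtt env 1 2 2 2 ky ky'),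
   ([],[(1,3,ky')],((1)),rtt env 2 1 2 2 kx ky),
   ([(2,2,ky)],[],((-1)),rtt env 1 1 2 3 kx ky')]"])
   apply (simp add: wrap_def T_lin)
  apply (simp add: slc_def wrap_def rtt_def negf_def fmul_def fsc_def mnr_def tl1_def famA_def famAD_def e)
  apply (simp add: algebra_simps)
  done

lemma famAD_132:
  assumes e: "env ky' = env ky + eta"
  shows "lcs (semT env) (famAD env 1 3 2 kx ky ky') v = 0"
  apply (rule cert_gen[where Is="[([],[(2,3,ky')],((-1)),rtt env 1 1 2 3 kx ky),
   ([(1,2,kx)],[],((-1)),rtt env 1 2 3 3 ky ky'),
   ([(1,2,ky)],[],((-1)),rtt env 1 2 3 3 ky' kx),
   ([(1,2,ky)],[],((1)),rtt env 2 1 3 3 kx ky'),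
   ([(1,2,ky)],[],((1)),rtt env 2 1 3 3 ky' kx),
   ([],[(2,3,ky')],((1)),rtt env 1 1 3 2 kx ky),
   ([],[(1,3,ky')],((-1)),rtt env 1 2 3 2 kx ky),
   ([],[(2,3,ky')],((1)),rtt env 1 1 3 2 ky kx),
   ([],[(1,3,ky')],((-1)),rtt env 1 2 3 2 ky kx),
   ([],[(1,3,ky')],((1)),rtt env 2 1 2 3 kx ky),
   ([(2,2,ky)],[],((-1)),rtt env 1 1 3 3 kx ky')]"])
   apply (simp add: wrap_def T_lin)
  apply (simp add: slc_def wrap_def rtt_def negf_def fmul_def fsc_def mnr_def tl1_def famA_def famAD_def e)
  apply (simp add: algebra_simps)
  done

lemma famAD_211:
  assumes e: "env ky' = env ky + eta"
  shows "lcs (semT env) (famAD env 2 1 1 kx ky ky') v = 0"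
  apply (rule cert_gen[where Is="[([],[(2,3,ky')],((-1)),rtt env 1 2 1 1 kx ky),
   ([],[(2,3,kx)],((-1)),rtt env 1 2 1 1 ky ky'),
   ([(1,1,ky)],[],((-1)),rtt env 2 2 1 3 ky' kx),
   ([(1,1,ky)],[],((1)),rtt env 2 2 3 1 kx ky'),
   ([(1,1,ky)],[],((1)),rtt env 2 2 3 1 ky' kx),
   ([],[(2,3,ky')],((1)),rtt env 2 1 1 1 kx ky),
   ([],[(2,3,ky')],((1)),rtt env 2 1 1 1 ky kx),
   ([],[(1,3,ky')],((-1)),rtt env 2 2 1 1 ky kx),
   ([(2,1,ky)],[],((-1)),rtt env 2 1 1 3 kx ky')]"])
   apply (simp add: wrap_def T_lin)
  apply (simp add: slc_def wrap_def rtt_def negf_def fmul_def fsc_def mnr_def tl1_def famA_def famAD_def e)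
  apply (simp add: algebra_simps)
  done

lemma famAD_231:
  assumes e: "env ky' = env ky + eta"
  shows "lcs (semT env) (famAD env 2 3 1 kx ky ky') v = 0"
  apply (rule cert_gen[where Is="[([],[(2,3,ky')],((1)),rtt env 1 2 1 3 ky kx),
   ([(1,1,ky)],[],((1)),rtt env 2 2 3 3 kx ky'),
   ([(2,1,kx)],[],((-1)),rtt env 1 2 3 3 ky ky'),
   ([],[(1,3,ky')],((-1)),rtt env 2 2 1 3 ky kx),
   ([(2,1,ky)],[],((-1)),rtt env 2 1 3 3 kx ky')]"])
   apply (simp add: wrap_def T_lin)
  apply (simp add: slc_def wrap_def rtt_def negf_def fmul_def fsc_def mnr_def tl1_def famA_def famAD_def e)
  apply (simp add: algebra_simps)
  done

lemma famAD_222: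
  assumes e: "env ky' = env ky + eta"
  shows "lcs (semT env) (famAD env 2 2 2 kx ky ky') v = 0"
  apply (rule cert_gen[where Is="[([],[(2,3,ky')],((-1)),rtt env 1 2 2 2 kx ky),
   ([],[(2,3,kx)],((-1)),rtt env 1 2 2 2 ky ky'),
   ([(1,2,ky)],[],((-1)),rtt env 2 2 2 3 ky' kx),
   ([(1,2,ky)],[],((1)),rtt env 2 2 3 2 kx ky'),
   ([(1,2,ky)],[],((1)),rtt env 2 2 3 2 ky' kx),
   ([],[(2,3,ky')],((1)),rtt env 2 1 2 2 kx ky),
   ([],[(2,3,ky')],((1)),rtt env 2 1 2 2 ky kx),
   ([],[(1,3,ky')],((-1)),rtt env 2 2 2 2 ky kx),
   ([(2,2,ky)],[],((-1)),rtt env 2 1 2 3 kx ky')]"])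
   apply (simp add: wrap_def T_lin)
  apply (simp add: slc_def wrap_def rtt_def negf_def fmul_def fsc_def mnr_def tl1_def famA_def famAD_def e)
  apply (simp add: algebra_simps)
  done

lemma famAD_232:
  assumes e: "env ky' = env ky + eta"
  shows "lcs (semT env) (famAD env 2 3 2 kx ky ky') v = 0"
  apply (rule cert_gen[where Is="[([],[(2,3,ky')],((1)),rtt env 1 2 2 3 ky kx),
   ([(1,2,ky)],[],((1)),rtt env 2 2 3 3 kx ky'),
   ([(2,2,kx)],[],((-1)),rtt env 1 2 3 3 ky ky'),
   ([],[(1,3,ky')],((-1)),rtt env 2 2 2 3 ky kx),
   ([(2,2,ky)],[],((-1)),rtt env 2 1 3 3 kx ky')]"])
   apply (simp add: wrap_def T_lin)
  apply (simp add: slc_def wrap_def rtt_def negf_def fmul_def fsc_def mnr_def tl1_def famA_def famAD_def e)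
  apply (simp add: algebra_simps)
  done

lemma famR1_112:
  assumes e: "env ky' = env ky + eta"
  shows "lcs (semT env) (famR1 env 1 1 2 kx ky ky') v = 0"
  apply (rule cert_gen[where Is="[([],[(2,3,ky')],((1)),rtt env 1 1 1 2 kx ky),
   ([],[(2,3,ky')],((2)),rtt env 1 1 1 2 ky kx),
   ([(1,1,ky)],[],((1)),rtt env 1 2 2 3 kx ky'),
   ([],[(2,3,ky')],((-1)),rtt env 1 1 2 1 kx ky),
   ([(1,2,ky)],[],((1)),rtt env 1 2 1 3 kx ky'),
   ([],[(1,3,ky')],((-1)),rtt env 2 1 1 2 ky kx),
   ([(2,1,ky)],[],((-1)),rtt env 1 1 2 3 kx ky'),
   ([],[(1,3,kx)],((1)),rtt env 2 1 1 2 ky ky'),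
   ([],[(1,3,ky')],((-1)),rtt env 2 1 2 1 ky kx),
   ([(2,2,ky)],[],((-1)),rtt env 1 1 1 3 kx ky'),
   ([],[(1,3,kx)],((1)),rtt env 2 1 2 1 ky ky')]"])
   apply (simp add: wrap_def T_lin)
  apply (simp add: slc_def wrap_def rtt_def negf_def fmul_def fsc_def mnr_def tl1_def famA_def famR1_def e)
  apply (simp add: algebra_simps)
  done

lemma famR1_121:
  assumes e: "env ky' = env ky + eta"
  shows "lcs (semT env) (famR1 env 1 2 1 kx ky ky') v = 0"
  apply (rule cert_gen[where Is="[([],[(2,3,ky')],((1)),rtt env 1 1 1 2 kx ky),
   ([],[(2,3,ky')],((2)),rtt env 1 1 1 2 ky kx),
   ([(1,1,ky)],[],((1)),rtt env 1 2 2 3 kx ky'),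
   ([],[(2,3,ky')],((-1)),rtt env 1 1 2 1 kx ky),
   ([(1,2,ky)],[],((1)),rtt env 1 2 1 3 kx ky'),
   ([],[(1,3,ky')],((-1)),rtt env 2 1 1 2 ky kx),
   ([(2,1,ky)],[],((-1)),rtt env 1 1 2 3 kx ky'),
   ([],[(1,3,kx)],((1)),rtt env 2 1 1 2 ky ky'),
   ([],[(1,3,ky')],((-1)),rtt env 2 1 2 1 ky kx),
   ([(2,2,ky)],[],((-1)),rtt env 1 1 1 3 kx ky'),
   ([],[(1,3,kx)],((1)),rtt env 2 1 2 1 ky ky')]"])
   apply (simp add: wrap_def T_lin)
  apply (simp add: slc_def wrap_def rtt_def negf_def fmul_def fsc_def mnr_def tl1_def famA_def famR1_def e)
  apply (simp add: algebra_simps)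
  done

lemma famR1_212:
  assumes e: "env ky' = env ky + eta"
  shows "lcs (semT env) (famR1 env 2 1 2 kx ky ky') v = 0"
  apply (rule cert_gen[where Is="[([(1,1,ky)],[],((-1)),rtt env 2 2 2 3 ky' kx),
   ([(1,1,ky)],[],((1)),rtt env 2 2 3 2 kx ky'),
   ([(1,1,ky)],[],((1)),rtt env 2 2 3 2 ky' kx),
   ([],[(2,3,ky)],((1)),rtt env 1 2 1 2 ky' kx),
   ([(1,2,kx)],[],((1)),rtt env 2 2 1 3 ky ky'),
   ([(1,2,kx)],[],((1)),rtt env 2 2 1 3 ky' ky),
   ([],[(2,3,ky')],((1)),rtt env 1 2 2 1 ky kx),
   ([(1,2,ky)],[],((1)),rtt env 2 2 1 3 kx ky'),
   ([(1,2,ky)],[],((-1)),rtt env 2 2 1 3 ky' kx),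
   ([(1,2,ky)],[],((1)),rtt env 2 2 3 1 kx ky'),
   ([(1,2,ky')],[],((1)),rtt env 2 2 1 3 ky kx),
   ([(1,2,ky')],[],((-1)),rtt env 2 2 3 1 kx ky),
   ([],[(2,1,ky')],((1)),rtt env 1 2 3 2 kx ky),
   ([],[(2,1,ky)],((-1)),rtt env 1 2 3 2 kx ky'),
   ([(2,1,kx)],[],((1)),rtt env 1 2 2 3 ky ky'),
   ([(2,1,kx)],[],((1)),rtt env 1 2 2 3 ky' ky),
   ([],[(1,3,ky')],((1)),rtt env 2 2 1 2 kx ky),
   ([(2,1,ky)],[],((-1)),rtt env 1 2 3 2 ky' kx),
   ([],[(1,2,ky')],((-1)),rtt env 2 2 1 3 ky kx),
   ([],[(1,2,kx)],((-1)),rtt env 2 2 1 3 ky ky'),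
   ([],[(2,3,kx)],((-1)),rtt env 2 1 1 2 ky' ky),
   ([(2,1,ky')],[],((1)),rtt env 1 2 3 2 ky kx),
   ([(2,1,ky')],[],((-1)),rtt env 2 1 2 3 kx ky),
   ([],[(1,2,ky)],((1)),rtt env 2 2 1 3 ky' kx),
   ([],[(1,2,kx)],((-1)),rtt env 2 2 1 3 ky' ky),
   ([],[(2,3,ky')],((1)),rtt env 2 1 2 1 kx ky),
   ([],[(2,3,ky)],((-1)),rtt env 2 1 2 1 kx ky'),
   ([],[(1,3,ky')],((-1)),rtt env 2 2 2 1 kx ky),
   ([],[(2,3,kx)],((1)),rtt env 2 1 2 1 ky ky'),
   ([],[(2,1,ky')],((-1)),rtt env 2 1 2 3 ky kx),
   ([],[(1,3,ky')],((-2)),rtt env 2 2 2 1 ky kx),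
   ([(2,2,ky)],[],((-1)),rtt env 2 1 1 3 kx ky'),
   ([],[(2,1,ky)],((1)),rtt env 2 1 2 3 ky' kx),
   ([(2,3,kx)],[],((1)),rtt env 1 2 2 1 ky ky'),
   ([(2,3,kx)],[],((1)),rtt env 1 2 2 1 ky' ky),
   ([],[(1,2,ky')],((1)),rtt env 2 2 3 1 kx ky),
   ([],[(1,2,ky)],((-1)),rtt env 2 2 3 1 kx ky'),
   ([(2,3,ky)],[],((-1)),rtt env 1 2 1 2 ky' kx),
   ([],[(2,1,kx)],((-1)),rtt env 2 1 3 2 ky ky'),
   ([(2,3,ky)],[],((1)),rtt env 2 1 2 1 kx ky'),
   ([(2,3,ky')],[],((1)),rtt env 1 2 1 2 ky kx),
   ([],[(2,1,kx)],((-1)),rtt env 2 1 3 2 ky' ky),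
   ([(2,3,ky')],[],((-1)),rtt env 2 1 2 1 kx ky)]"])
   apply (simp add: wrap_def T_lin)
  apply (simp add: slc_def wrap_def rtt_def negf_def fmul_def fsc_def mnr_def tl1_def famA_def famR1_def e)
  apply (simp add: algebra_simps)
  done

lemma famR1_221:
  assumes e: "env ky' = env ky + eta"
  shows "lcs (semT env) (famR1 env 2 2 1 kx ky ky') v = 0"
  apply (rule cert_gen[where Is="[([(1,1,ky)],[],((-1)),rtt env 2 2 2 3 ky' kx),
   ([(1,1,ky)],[],((1)),rtt env 2 2 3 2 kx ky'),
   ([(1,1,ky)],[],((1)),rtt env 2 2 3 2 ky' kx),
   ([],[(2,3,ky)],((1)),rtt env 1 2 1 2 ky' kx),
   ([(1,2,kx)],[],((1)),rtt env 2 2 1 3 ky ky'),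
   ([(1,2,kx)],[],((1)),rtt env 2 2 1 3 ky' ky),
   ([],[(2,3,ky')],((1)),rtt env 1 2 2 1 ky kx),
   ([(1,2,ky)],[],((1)),rtt env 2 2 1 3 kx ky'),
   ([(1,2,ky)],[],((-1)),rtt env 2 2 1 3 ky' kx),
   ([(1,2,ky)],[],((1)),rtt env 2 2 3 1 kx ky'),
   ([(1,2,ky')],[],((1)),rtt env 2 2 1 3 ky kx),
   ([(1,2,ky')],[],((-1)),rtt env 2 2 3 1 kx ky),
   ([],[(2,1,ky')],((1)),rtt env 1 2 3 2 kx ky),
   ([],[(2,1,ky)],((-1)),rtt env 1 2 3 2 kx ky'),
   ([(2,1,kx)],[],((1)),rtt env 1 2 2 3 ky ky'),
   ([(2,1,kx)],[],((1)),rtt env 1 2 2 3 ky' ky),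
   ([],[(1,3,ky')],((1)),rtt env 2 2 1 2 kx ky),
   ([(2,1,ky)],[],((-1)),rtt env 1 2 3 2 ky' kx),
   ([],[(1,2,ky')],((-1)),rtt env 2 2 1 3 ky kx),
   ([],[(1,2,kx)],((-1)),rtt env 2 2 1 3 ky ky'),
   ([],[(2,3,kx)],((-1)),rtt env 2 1 1 2 ky' ky),
   ([(2,1,ky')],[],((1)),rtt env 1 2 3 2 ky kx),
   ([(2,1,ky')],[],((-1)),rtt env 2 1 2 3 kx ky),
   ([],[(1,2,ky)],((1)),rtt env 2 2 1 3 ky' kx),
   ([],[(1,2,kx)],((-1)),rtt env 2 2 1 3 ky' ky),
   ([],[(2,3,ky')],((1)),rtt env 2 1 2 1 kx ky),
   ([],[(2,3,ky)],((-1)),rtt env 2 1 2 1 kx ky'),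
   ([],[(1,3,ky')],((-1)),rtt env 2 2 2 1 kx ky),
   ([],[(2,3,kx)],((1)),rtt env 2 1 2 1 ky ky'),
   ([],[(2,1,ky')],((-1)),rtt env 2 1 2 3 ky kx),
   ([],[(1,3,ky')],((-2)),rtt env 2 2 2 1 ky kx),
   ([(2,2,ky)],[],((-1)),rtt env 2 1 1 3 kx ky'),
   ([],[(2,1,ky)],((1)),rtt env 2 1 2 3 ky' kx),
   ([(2,3,kx)],[],((1)),rtt env 1 2 2 1 ky ky'),
   ([(2,3,kx)],[],((1)),rtt env 1 2 2 1 ky' ky),
   ([],[(1,2,ky')],((1)),rtt env 2 2 3 1 kx ky),
   ([],[(1,2,ky)],((-1)),rtt env 2 2 3 1 kx ky'),
   ([(2,3,ky)],[],((-1)),rtt env 1 2 1 2 ky' kx),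
   ([],[(2,1,kx)],((-1)),rtt env 2 1 3 2 ky ky'),
   ([(2,3,ky)],[],((1)),rtt env 2 1 2 1 kx ky'),
   ([(2,3,ky')],[],((1)),rtt env 1 2 1 2 ky kx),
   ([],[(2,1,kx)],((-1)),rtt env 2 1 3 2 ky' ky),
   ([(2,3,ky')],[],((-1)),rtt env 2 1 2 1 kx ky)]"])
   apply (simp add: wrap_def T_lin)
  apply (simp add: slc_def wrap_def rtt_def negf_def fmul_def fsc_def mnr_def tl1_def famA_def famR1_def e)
  apply (simp add: algebra_simps)
  done

lemma famR3_112:
  assumes e: "env ky' = env ky + eta"
  shows "lcs (semT env) (famR3 env 1 1 2 kx ky ky') v = 0"
  apply (rule cert_gen[where Is="[([],[(2,3,ky')],((-1)),rtt env 1 1 1 2 ky kx),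
   ([(1,1,ky)],[],((-1)),rtt env 1 2 2 3 kx ky'),
   ([],[(1,3,ky')],((1)),rtt env 2 1 1 2 ky kx),
   ([(2,1,ky)],[],((1)),rtt env 1 1 2 3 kx ky')]"])
   apply (simp add: wrap_def T_lin)
  apply (simp add: slc_def wrap_def rtt_def negf_def fmul_def fsc_def mnr_def tl1_def famA_def famR3_def e)
  apply (simp add: algebra_simps)
  done

lemma famR3_121:
  assumes e: "env ky' = env ky + eta"
  shows "lcs (semT env) (famR3 env 1 2 1 kx ky ky') v = 0"
  apply (rule cert_gen[where Is="[([],[(2,3,ky')],((-1)),rtt env 1 1 1 2 kx ky),
   ([],[(2,3,ky')],((-1)),rtt env 1 1 1 2 ky kx),
   ([],[(2,3,ky')],((1)),rtt env 1 1 2 1 kx ky),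
   ([(1,2,ky)],[],((-1)),rtt env 1 2 1 3 kx ky'),
   ([],[(1,3,ky')],((1)),rtt env 2 1 2 1 ky kx),
   ([(2,2,ky)],[],((1)),rtt env 1 1 1 3 kx ky')]"])
   apply (simp add: wrap_def T_lin)
  apply (simp add: slc_def wrap_def rtt_def negf_def fmul_def fsc_def mnr_def tl1_def famA_def famR3_def e)
  apply (simp add: algebra_simps)
  done

lemma famR3_212:
  assumes e: "env ky' = env ky + eta"
  shows "lcs (semT env) (famR3 env 2 1 2 kx ky ky') v = 0"
  apply (rule cert_gen[where Is="[([],[(2,3,kx)],((-1)),rtt env 1 2 1 2 ky ky'),
   ([(1,1,ky)],[],((1)),rtt env 2 2 2 3 ky' kx),
   ([(1,1,ky)],[],((-1)),rtt env 2 2 3 2 kx ky'),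
   ([(1,1,ky)],[],((-1)),rtt env 2 2 3 2 ky' kx),
   ([],[(2,3,ky)],((-1)),rtt env 1 2 1 2 ky' kx),
   ([(1,2,kx)],[],((-1)),rtt env 2 2 1 3 ky ky'),
   ([(1,2,kx)],[],((-1)),rtt env 2 2 1 3 ky' ky),
   ([(1,2,ky)],[],((1)),rtt env 2 2 1 3 ky' kx),
   ([(1,2,ky)],[],((-1)),rtt env 2 2 3 1 kx ky'),
   ([(1,2,ky')],[],((-1)),rtt env 2 2 1 3 ky kx),
   ([(1,2,ky')],[],((1)),rtt env 2 2 3 1 kx ky),
   ([],[(2,1,ky')],((-1)),rtt env 1 2 3 2 kx ky),
   ([],[(2,1,ky)],((1)),rtt env 1 2 3 2 kx ky'),
   ([(2,1,kx)],[],((-1)),rtt env 1 2 2 3 ky ky'),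
   ([(2,1,kx)],[],((-1)),rtt env 1 2 2 3 ky' ky),
   ([],[(1,3,ky')],((-1)),rtt env 2 2 1 2 kx ky),
   ([(2,1,ky)],[],((1)),rtt env 1 2 3 2 ky' kx),
   ([],[(1,2,ky')],((1)),rtt env 2 2 1 3 ky kx),
   ([],[(1,2,kx)],((1)),rtt env 2 2 1 3 ky ky'),
   ([(2,1,ky')],[],((-1)),rtt env 1 2 3 2 ky kx),
   ([(2,1,ky')],[],((1)),rtt env 2 1 2 3 kx ky),
   ([],[(1,2,ky)],((-1)),rtt env 2 2 1 3 ky' kx),
   ([],[(1,2,kx)],((1)),rtt env 2 2 1 3 ky' ky),
   ([],[(2,3,ky')],((-1)),rtt env 2 1 2 1 kx ky),
   ([],[(2,3,ky)],((1)),rtt env 2 1 2 1 kx ky'),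
   ([],[(1,3,ky')],((1)),rtt env 2 2 2 1 kx ky),
   ([],[(2,1,ky')],((1)),rtt env 2 1 2 3 ky kx),
   ([],[(1,3,ky')],((1)),rtt env 2 2 2 1 ky kx),
   ([],[(2,3,kx)],((1)),rtt env 2 1 2 1 ky' ky),
   ([],[(2,1,ky)],((-1)),rtt env 2 1 2 3 ky' kx),
   ([(2,3,kx)],[],((-1)),rtt env 1 2 2 1 ky ky'),
   ([(2,3,kx)],[],((-1)),rtt env 1 2 2 1 ky' ky),
   ([],[(1,2,ky')],((-1)),rtt env 2 2 3 1 kx ky),
   ([],[(1,2,ky)],((1)),rtt env 2 2 3 1 kx ky'),
   ([(2,3,ky)],[],((1)),rtt env 1 2 1 2 ky' kx),
   ([],[(2,1,kx)],((1)),rtt env 2 1 3 2 ky ky'),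
   ([(2,3,ky)],[],((-1)),rtt env 2 1 2 1 kx ky'),
   ([(2,3,ky')],[],((-1)),rtt env 1 2 1 2 ky kx),
   ([],[(2,1,kx)],((1)),rtt env 2 1 3 2 ky' ky),
   ([(2,3,ky')],[],((1)),rtt env 2 1 2 1 kx ky)]"])
   apply (simp add: wrap_def T_lin)
  apply (simp add: slc_def wrap_def rtt_def negf_def fmul_def fsc_def mnr_def tl1_def famA_def famR3_def e)
  apply (simp add: algebra_simps)
  done

lemma famR3_221:
  assumes e: "env ky' = env ky + eta"
  shows "lcs (semT env) (famR3 env 2 2 1 kx ky ky') v = 0"
  apply (rule cert_gen[where Is="[([],[(2,3,ky')],((-1)),rtt env 1 2 2 1 ky kx),
   ([(1,2,ky)],[],((-1)),rtt env 2 2 1 3 kx ky'),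
   ([],[(1,3,ky')],((1)),rtt env 2 2 2 1 ky kx),
   ([(2,2,ky)],[],((1)),rtt env 2 1 1 3 kx ky')]"])
   apply (simp add: wrap_def T_lin)
  apply (simp add: slc_def wrap_def rtt_def negf_def fmul_def fsc_def mnr_def tl1_def famA_def famR3_def e)
  apply (simp add: algebra_simps)
  done

end



context rttA begin

interpretation V: vector_space sc by (rule vs)

lemma exists_out: "finite (S::complex set) \<Longrightarrow> \<exists>x. x \<notin> S"
  using ex_new_if_finite[OF infinite_UNIV_char_0] by blast

lemma poly_vanish:
  "finite S \<Longrightarrow> (\<forall>x. x \<notin> S \<longrightarrow> (\<Sum>m\<le>N. sc (x^m) (a m)) = 0) \<Longrightarrow> (\<forall>m\<le>N. a m = 0)"
proof (induction N arbitrary: a S)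
  case 0
  obtain x where "x \<notin> S" using exists_out[OF 0(1)] by blast
  then show ?case using 0 by auto
next
  case (Suc N)
  define S' where "S' = S \<union> (\<lambda>s. s / 2) ` S"
  have fS': "finite S'" using Suc.prems(1) by (simp add: S'_def)
  define b where "b m = sc (2^m - 2^(Suc N)) (a m)" for m
  have g: "(\<Sum>m\<le>N. sc (x^m) (b m)) = 0" if x: "x \<notin> S'" for x
  proof -
    have x1: "x \<notin> S" and x2: "2 * x \<notin> S" using x by (auto simp: S'_def image_iff) (metis mult.commute)
    have tw: "sc ((2*x)^m) (a m) - sc (2^(Suc N)) (sc (x^m) (a m)) = sc (x^m) (b m)" for m
      by (simp add: b_def power_mult_distrib algebra_simps)
    have "(\<Sum>m\<le>Suc N. sc ((2*x)^m) (a m)) - sc (2^(Suc N)) (\<Sum>m\<le>Suc N. sc (x^m) (a m))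
        = (\<Sum>m\<le>Suc N. sc ((2*x)^m) (a m) - sc (2^(Suc N)) (sc (x^m) (a m)))"
      by (simp only: V.scale_sum_right sum_subtractf)
    also have "\<dots> = (\<Sum>m\<le>Suc N. sc (x^m) (b m))" by (simp only: tw)
    also have "\<dots> = (\<Sum>m\<le>N. sc (x^m) (b m))"
      by (simp add: b_def)
    finally have eq: "(\<Sum>m\<le>Suc N. sc ((2*x)^m) (a m)) - sc (2^(Suc N)) (\<Sum>m\<le>Suc N. sc (x^m) (a m))
        = (\<Sum>m\<le>N. sc (x^m) (b m))" .
    have f1: "(\<Sum>m\<le>Suc N. sc (x^m) (a m)) = 0" using Suc.prems(2) x1 by blast
    have f2: "(\<Sum>m\<le>Suc N. sc ((2*x)^m) (a m)) = 0" using Suc.prems(2) x2 by blast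
    show ?thesis using eq unfolding f1 f2 by simp
  qed
  have b0: "\<forall>m\<le>N. b m = 0" by (rule Suc.IH[OF fS']) (use g in blast)
  have a0: "a m = 0" if "m \<le> N" for m
  proof -
    have "(2::complex)^m \<noteq> 2^(Suc N)"
    proof
      assume "(2::complex)^m = 2^(Suc N)"
      then have "(2::nat)^m = 2^(Suc N)" by (metis of_nat_eq_iff of_nat_numeral of_nat_power)
      then have "m = Suc N" by (metis power_inject_exp one_less_numeral_iff semiring_norm(76))
      then show False using that by simp
    qed
    then show ?thesis using b0[rule_format, OF that] by (simp add: b_def)
  qed
  obtain x where x: "x \<notin> S \<union> {0}" using exists_out[of "S \<union> {0}"] Suc.prems(1) by blast
  have "(\<Sum>m\<le>Suc N. sc (x^m) (a m)) = sc (x^(Suc N)) (a (Suc N))"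
    using a0 by simp
  then have "a (Suc N) = 0" using Suc.prems(2) x by auto
  then show ?case using a0 le_Suc_eq by auto
qed

lemma poly_vanish_pt:
  assumes "\<forall>x. x \<noteq> y \<longrightarrow> (\<Sum>m\<le>N. sc (x^m) (a m)) = 0"
  shows "(\<Sum>m\<le>N. sc (z^m) (a m)) = 0"
proof -
  have "\<forall>m\<le>N. a m = 0" by (rule poly_vanish[of "{y}"]) (use assms in auto)
  then show ?thesis by simp
qed

end



context rttA begin

interpretation V: vector_space sc by (rule vs)

lemma qminor_lin: "a1 \<in> {1,2,3} \<Longrightarrow> a2 \<in> {1,2,3} \<Longrightarrow> b1 \<in> {1,2,3} \<Longrightarrow> b2 \<in> {1,2,3} \<Longrightarrow>
   lin_op (qminor sc Tc M eta a1 a2 b1 b2 y)"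
  unfolding qminor_def
  by (rule lin_op_minus[OF lin_op_comp[OF T_lin T_lin] lin_op_comp[OF T_lin T_lin]]) auto


lemma A_scaled111:
  shows "sc (x - y - eta) (T 1 1 x (qminor sc Tc M eta 1 2 1 3 y p) - qminor sc Tc M eta 1 2 1 3 y (T 1 1 x p)) = 0"
proof -
  define env where "env = (\<lambda>k::nat. if k = 0 then x else if k = 1 then y else y + eta)"
  have e: "env 2 = env 1 + eta" by (simp add: env_def)
  have "lcs (semT env) (famAD env 1 1 1 0 1 2) p = 0"
    using famAD_111[OF e] by auto
  then show ?thesis
    by (simp add: lcs_def famAD_def fsc_def famA_def fmul_def tl1_def mnr_def negf_def env_def
        qminor_def lin_opD[OF T_lin] algebra_simps)
qed

lemma A_scaled131:
  shows "sc (x - y - 0) (T 1 3 x (qminor sc Tc M eta 1 2 1 3 y p) - qminor sc Tc M eta 1 2 1 3 y (T 1 3 x p)) = 0"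
proof -
  define env where "env = (\<lambda>k::nat. if k = 0 then x else if k = 1 then y else y + eta)"
  have e: "env 2 = env 1 + eta" by (simp add: env_def)
  have "lcs (semT env) (famAD env 1 3 1 0 1 2) p = 0"
    using famAD_131[OF e] by auto
  then show ?thesis
    by (simp add: lcs_def famAD_def fsc_def famA_def fmul_def tl1_def mnr_def negf_def env_def
        qminor_def lin_opD[OF T_lin] algebra_simps)
qed

lemma A_scaled122:
  shows "sc (x - y - eta) (T 1 2 x (qminor sc Tc M eta 1 2 2 3 y p) - qminor sc Tc M eta 1 2 2 3 y (T 1 2 x p)) = 0"
proof -
  define env where "env = (\<lambda>k::nat. if k = 0 then x else if k = 1 then y else y + eta)"
  have e: "env 2 = env 1 + eta" by (simp add: env_def)
  have "lcs (semT env) (famAD env 1 2 2 0 1 2) p = 0"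
    using famAD_122[OF e] by auto
  then show ?thesis
    by (simp add: lcs_def famAD_def fsc_def famA_def fmul_def tl1_def mnr_def negf_def env_def
        qminor_def lin_opD[OF T_lin] algebra_simps)
qed

lemma A_scaled132:
  shows "sc (x - y - 0) (T 1 3 x (qminor sc Tc M eta 1 2 2 3 y p) - qminor sc Tc M eta 1 2 2 3 y (T 1 3 x p)) = 0"
proof -
  define env where "env = (\<lambda>k::nat. if k = 0 then x else if k = 1 then y else y + eta)"
  have e: "env 2 = env 1 + eta" by (simp add: env_def)
  have "lcs (semT env) (famAD env 1 3 2 0 1 2) p = 0"
    using famAD_132[OF e] by auto
  then show ?thesis
    by (simp add: lcs_def famAD_def fsc_def famA_def fmul_def tl1_def mnr_def negf_def env_def
        qminor_def lin_opD[OF T_lin] algebra_simps)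
qed

lemma A_scaled211:
  shows "sc (x - y - eta) (T 2 1 x (qminor sc Tc M eta 1 2 1 3 y p) - qminor sc Tc M eta 1 2 1 3 y (T 2 1 x p)) = 0"
proof -
  define env where "env = (\<lambda>k::nat. if k = 0 then x else if k = 1 then y else y + eta)"
  have e: "env 2 = env 1 + eta" by (simp add: env_def)
  have "lcs (semT env) (famAD env 2 1 1 0 1 2) p = 0"
    using famAD_211[OF e] by auto
  then show ?thesis
    by (simp add: lcs_def famAD_def fsc_def famA_def fmul_def tl1_def mnr_def negf_def env_def
        qminor_def lin_opD[OF T_lin] algebra_simps)
qed

lemma A_scaled231:
  shows "sc (x - y - 0) (T 2 3 x (qminor sc Tc M eta 1 2 1 3 y p) - qminor sc Tc M eta 1 2 1 3 y (T 2 3 x p)) = 0"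
proof -
  define env where "env = (\<lambda>k::nat. if k = 0 then x else if k = 1 then y else y + eta)"
  have e: "env 2 = env 1 + eta" by (simp add: env_def)
  have "lcs (semT env) (famAD env 2 3 1 0 1 2) p = 0"
    using famAD_231[OF e] by auto
  then show ?thesis
    by (simp add: lcs_def famAD_def fsc_def famA_def fmul_def tl1_def mnr_def negf_def env_def
        qminor_def lin_opD[OF T_lin] algebra_simps)
qed

lemma A_scaled222:
  shows "sc (x - y - eta) (T 2 2 x (qminor sc Tc M eta 1 2 2 3 y p) - qminor sc Tc M eta 1 2 2 3 y (T 2 2 x p)) = 0"
proof -
  define env where "env = (\<lambda>k::nat. if k = 0 then x else if k = 1 then y else y + eta)"
  have e: "env 2 = env 1 + eta" by (simp add: env_def)
  have "lcs (semT env) (famAD env 2 2 2 0 1 2) p = 0"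
    using famAD_222[OF e] by auto
  then show ?thesis
    by (simp add: lcs_def famAD_def fsc_def famA_def fmul_def tl1_def mnr_def negf_def env_def
        qminor_def lin_opD[OF T_lin] algebra_simps)
qed

lemma A_scaled232:
  shows "sc (x - y - 0) (T 2 3 x (qminor sc Tc M eta 1 2 2 3 y p) - qminor sc Tc M eta 1 2 2 3 y (T 2 3 x p)) = 0"
proof -
  define env where "env = (\<lambda>k::nat. if k = 0 then x else if k = 1 then y else y + eta)"
  have e: "env 2 = env 1 + eta" by (simp add: env_def)
  have "lcs (semT env) (famAD env 2 3 2 0 1 2) p = 0"
    using famAD_232[OF e] by auto
  then show ?thesis
    by (simp add: lcs_def famAD_def fsc_def famA_def fmul_def tl1_def mnr_def negf_def env_def
        qminor_def lin_opD[OF T_lin] algebra_simps)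
qed

lemma A_scaled:
  assumes "a \<in> {1,2}" "b \<in> {1,2}" "e \<in> {b,3}"
  shows "sc (x - y - (if e = 3 then 0 else eta)) (T a e x (qminor sc Tc M eta 1 2 b 3 y p) - qminor sc Tc M eta 1 2 b 3 y (T a e x p)) = 0"
proof -
  have "a = 1 \<or> a = 2" "b = 1 \<or> b = 2" "e = b \<or> e = 3" using assms by auto
  then show ?thesis using A_scaled111[of x y p] A_scaled131[of x y p] A_scaled122[of x y p] A_scaled132[of x y p] A_scaled211[of x y p] A_scaled231[of x y p] A_scaled222[of x y p] A_scaled232[of x y p]
    by (elim disjE) simp_all
qed

lemma A_exact:
  assumes "a \<in> {1,2}" "b \<in> {1,2}" "e \<in> {b,3}"
  shows "T a e x (qminor sc Tc M eta 1 2 b 3 y p) = qminor sc Tc M eta 1 2 b 3 y (T a e x p)"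
proof -
  let ?Q = "qminor sc Tc M eta 1 2 b 3 y"
  let ?y0 = "y + (if e = 3 then 0 else eta)"
  have Ql: "lin_op ?Q" using assms by (intro qminor_lin) auto
  define co where "co m = Tc a e m (?Q p) - ?Q (Tc a e m p)" for m
  have rep: "T a e z (?Q p) - ?Q (T a e z p) = (\<Sum>m\<le>M. sc (z^m) (co m))" for z
  proof -
    have "?Q (T a e z p) = ?Q (\<Sum>m\<le>M. sc (z^m) (Tc a e m p))" by (simp only: Tpoly_def)
    also have "\<dots> = (\<Sum>m\<le>M. ?Q (sc (z^m) (Tc a e m p)))" by (rule lin_op_sum[OF Ql])
    also have "\<dots> = (\<Sum>m\<le>M. sc (z^m) (?Q (Tc a e m p)))" by (simp only: lin_opD(2)[OF Ql])
    finally have "?Q (T a e z p) = (\<Sum>m\<le>M. sc (z^m) (?Q (Tc a e m p)))" .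
    moreover have "T a e z (?Q p) = (\<Sum>m\<le>M. sc (z^m) (Tc a e m (?Q p)))" by (simp only: Tpoly_def)
    ultimately have "T a e z (?Q p) - ?Q (T a e z p) = (\<Sum>m\<le>M. sc (z^m) (Tc a e m (?Q p)) - sc (z^m) (?Q (Tc a e m p)))"
      by (simp only: sum_subtractf)
    then show ?thesis by (simp only: co_def V.scale_right_diff_distrib)
  qed
  have "\<forall>z. z \<noteq> ?y0 \<longrightarrow> (\<Sum>m\<le>M. sc (z^m) (co m)) = 0"
  proof (intro allI impI)
    fix z assume zy: "z \<noteq> ?y0"
    have "sc (z - y - (if e = 3 then 0 else eta)) (T a e z (?Q p) - ?Q (T a e z p)) = 0" by (rule A_scaled[OF assms])
    moreover have "z - y - (if e = 3 then 0 else eta) \<noteq> 0" using zy by auto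
    ultimately have "T a e z (?Q p) - ?Q (T a e z p) = 0" by simp
    then show "(\<Sum>m\<le>M. sc (z^m) (co m)) = 0" by (simp only: rep)
  qed
  then have "(\<Sum>m\<le>M. sc (x^m) (co m)) = 0" by (rule poly_vanish_pt)
  then show ?thesis using rep[of x] by simp
qed


lemma famA_ok111:
  assumes "env ky' = env ky + eta"
  shows "lcs (semT env) (famA 1 1 1 kx ky ky') v = 0"
  using A_exact[of 1 1 1 "env kx" "env ky" v] assms
  by (simp add: lcs_def famA_def fmul_def tl1_def mnr_def negf_def qminor_def lin_opD[OF T_lin] algebra_simps)

lemma famA_ok131:
  assumes "env ky' = env ky + eta"
  shows "lcs (semT env) (famA 1 3 1 kx ky ky') v = 0"
  using A_exact[of 1 1 3 "env kx" "env ky" v] assms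
  by (simp add: lcs_def famA_def fmul_def tl1_def mnr_def negf_def qminor_def lin_opD[OF T_lin] algebra_simps)

lemma famA_ok122:
  assumes "env ky' = env ky + eta"
  shows "lcs (semT env) (famA 1 2 2 kx ky ky') v = 0"
  using A_exact[of 1 2 2 "env kx" "env ky" v] assms
  by (simp add: lcs_def famA_def fmul_def tl1_def mnr_def negf_def qminor_def lin_opD[OF T_lin] algebra_simps)

lemma famA_ok132:
  assumes "env ky' = env ky + eta"
  shows "lcs (semT env) (famA 1 3 2 kx ky ky') v = 0"
  using A_exact[of 1 2 3 "env kx" "env ky" v] assms
  by (simp add: lcs_def famA_def fmul_def tl1_def mnr_def negf_def qminor_def lin_opD[OF T_lin] algebra_simps)

lemma famA_ok211:
  assumes "env ky' = env ky + eta"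
  shows "lcs (semT env) (famA 2 1 1 kx ky ky') v = 0"
  using A_exact[of 2 1 1 "env kx" "env ky" v] assms
  by (simp add: lcs_def famA_def fmul_def tl1_def mnr_def negf_def qminor_def lin_opD[OF T_lin] algebra_simps)

lemma famA_ok231:
  assumes "env ky' = env ky + eta"
  shows "lcs (semT env) (famA 2 3 1 kx ky ky') v = 0"
  using A_exact[of 2 1 3 "env kx" "env ky" v] assms
  by (simp add: lcs_def famA_def fmul_def tl1_def mnr_def negf_def qminor_def lin_opD[OF T_lin] algebra_simps)

lemma famA_ok222:
  assumes "env ky' = env ky + eta"
  shows "lcs (semT env) (famA 2 2 2 kx ky ky') v = 0"
  using A_exact[of 2 2 2 "env kx" "env ky" v] assms
  by (simp add: lcs_def famA_def fmul_def tl1_def mnr_def negf_def qminor_def lin_opD[OF T_lin] algebra_simps)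

lemma famA_ok232:
  assumes "env ky' = env ky + eta"
  shows "lcs (semT env) (famA 2 3 2 kx ky ky') v = 0"
  using A_exact[of 2 2 3 "env kx" "env ky" v] assms
  by (simp add: lcs_def famA_def fmul_def tl1_def mnr_def negf_def qminor_def lin_opD[OF T_lin] algebra_simps)


lemma famA_ok:
  assumes "a \<in> {1,2}" "b \<in> {1,2}" "e \<in> {b,3}" "env ky' = env ky + eta"
  shows "lcs (semT env) (famA a e b kx ky ky') v = 0"
proof -
  have "a = 1 \<or> a = 2" "b = 1 \<or> b = 2" "e = b \<or> e = 3" using assms by auto
  then show ?thesis using famA_ok111[OF assms(4), of kx v] famA_ok131[OF assms(4), of kx v] famA_ok122[OF assms(4), of kx v] famA_ok132[OF assms(4), of kx v] famA_ok211[OF assms(4), of kx v] famA_ok231[OF assms(4), of kx v] famA_ok222[OF assms(4), of kx v] famA_ok232[OF assms(4), of kx v]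
    by (elim disjE) simp_all
qed


lemma famR1_ok:
  assumes "(a,p,q) \<in> {(1,1,2),(1,2,1),(2,1,2),(2,2,1)}" "env ky' = env ky + eta"
  shows "lcs (semT env) (famR1 env a p q kx ky ky') v = 0"
  using assms famR1_112[OF assms(2), of kx v] famR1_121[OF assms(2), of kx v] famR1_212[OF assms(2), of kx v] famR1_221[OF assms(2), of kx v]
  by auto

lemma famR3_ok:
  assumes "(a,p,q) \<in> {(1,1,2),(1,2,1),(2,1,2),(2,2,1)}" "env ky' = env ky + eta"
  shows "lcs (semT env) (famR3 env a p q kx ky ky') v = 0"
  using assms famR3_112[OF assms(2), of kx v] famR3_121[OF assms(2), of kx v] famR3_212[OF assms(2), of kx v] famR3_221[OF assms(2), of kx v]
  by auto

end



context rttA begin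

definition famY :: "(nat \<Rightarrow> complex) \<Rightarrow> nat \<Rightarrow> nat \<Rightarrow> nat \<Rightarrow> nat \<Rightarrow> nat \<Rightarrow> nat \<Rightarrow> (complex \<times> letter list) list" where
  "famY env p q kw kw' kz kz' =
     fsc (env kw - env kz) (fmul (mnr p 3 kw kw') (mnr q 3 kz kz'))
   @ fsc (- eta) (fmul (mnr q 3 kw kw') (mnr p 3 kz kz'))
   @ fsc (-(env kw - env kz - eta)) (fmul (mnr q 3 kz kz') (mnr p 3 kw kw'))"

lemma famY_ok12:
  assumes e1: "env kw' = env kw + eta" and e2: "env kz' = env kz + eta"
  shows "lcs (semT env) (famY env 1 2 kw kw' kz kz') v = 0"
  apply (rule cert_gen[where Is="[([],[(2,3,kw),(1,3,kw')],((-1)),rtt env 2 1 2 1 kz' kz),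
   ([(1,2,kw)],[],((-1)*eta),famA 2 3 1 kw' kz kz'),
   ([(2,2,kw)],[],((1)*eta),famA 1 3 1 kw' kz kz'),
   ([],[(2,3,kw),(1,3,kw')],((1)),rtt env 2 1 1 2 kz' kz),
   ([],[(2,3,kw),(1,3,kw')],((1)),rtt env 2 1 1 2 kz kz'),
   ([],[(1,3,kw),(2,3,kw')],((-1)),rtt env 2 1 1 2 kz kz'),
   ([(2,1,kz'),(1,2,kz)],[],((-1)),rtt env 1 2 3 3 kw kw'),
   ([(2,2,kz'),(1,1,kz)],[],((1)),rtt env 1 2 3 3 kw kw'),
   ([],[(1,3,kw),(2,3,kw')],((-1)),rtt env 2 1 1 2 kz' kz),
   ([],[(1,3,kw),(2,3,kw')],((1)),rtt env 2 1 2 1 kz' kz),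
   ([(1,1,kw)],[],((1)*(env kw - env kz)),famA 2 3 2 kw' kz kz'),
   ([],[(2,3,kw')],((1)),famR3 env 1 1 2 kw kz kz'),
   ([(2,1,kw)],[],((-1)*(env kw - env kz)),famA 1 3 2 kw' kz kz'),
   ([],[(1,3,kw')],((-1)),famR3 env 2 1 2 kw kz kz'),
   ([],[(2,3,kw')],((1)),famR1 env 1 2 1 kw kz kz'),
   ([],[(1,3,kw')],((-1)),famR1 env 2 1 2 kw kz kz')]"])
   apply (simp add: wrap_def T_lin e1 e2 famA_ok famR1_ok famR3_ok)
  apply (simp add: slc_def wrap_def rtt_def negf_def fmul_def fsc_def mnr_def tl1_def famA_def famR1_def famR3_def famY_def e1 e2)
  apply (simp add: algebra_simps)
  done

lemma famY_ok21:
  assumes e1: "env kw' = env kw + eta" and e2: "env kz' = env kz + eta"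
  shows "lcs (semT env) (famY env 2 1 kw kw' kz kz') v = 0"
  apply (rule cert_gen[where Is="[([],[(2,3,kw),(1,3,kw')],((1)),rtt env 2 1 2 1 kz' kz),
   ([(1,1,kw)],[],((-1)*eta),famA 2 3 2 kw' kz kz'),
   ([(2,1,kw)],[],((1)*eta),famA 1 3 2 kw' kz kz'),
   ([],[(2,3,kw),(1,3,kw')],((-1)),rtt env 2 1 1 2 kz' kz),
   ([],[(2,3,kw),(1,3,kw')],((-1)),rtt env 2 1 1 2 kz kz'),
   ([],[(1,3,kw),(2,3,kw')],((1)),rtt env 2 1 1 2 kz kz'),
   ([(2,1,kz'),(1,2,kz)],[],((1)),rtt env 1 2 3 3 kw kw'),
   ([(2,2,kz'),(1,1,kz)],[],((-1)),rtt env 1 2 3 3 kw kw'),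
   ([],[(1,3,kw),(2,3,kw')],((1)),rtt env 2 1 1 2 kz' kz),
   ([],[(1,3,kw),(2,3,kw')],((-1)),rtt env 2 1 2 1 kz' kz),
   ([(1,2,kw)],[],((1)*(env kw - env kz)),famA 2 3 1 kw' kz kz'),
   ([],[(2,3,kw')],((-1)),famR3 env 1 1 2 kw kz kz'),
   ([],[(1,3,kw')],((1)),famR3 env 2 1 2 kw kz kz'),
   ([(2,2,kw)],[],((-1)*(env kw - env kz)),famA 1 3 1 kw' kz kz')]"])
   apply (simp add: wrap_def T_lin e1 e2 famA_ok famR1_ok famR3_ok)
  apply (simp add: slc_def wrap_def rtt_def negf_def fmul_def fsc_def mnr_def tl1_def famA_def famR1_def famR3_def famY_def e1 e2)
  apply (simp add: algebra_simps)
  done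

lemma famY_ok11:
  assumes e1: "env kw' = env kw + eta" and e2: "env kz' = env kz + eta"
  shows "lcs (semT env) (famY env 1 1 kw kw' kz kz') v = 0"
  apply (rule cert_gen[where Is="[([],[(1,3,kw')],((1)*eta + (-1)*(env kw - env kz)),famA 2 1 1 kw kz kz'),
   ([(1,1,kw)],[],((-1)*eta + (1)*(env kw - env kz)),famA 2 3 1 kw' kz kz'),
   ([(2,1,kw)],[],((1)*eta + (-1)*(env kw - env kz)),famA 1 3 1 kw' kz kz'),
   ([],[(2,3,kw')],((-1)*eta + (1)*(env kw - env kz)),famA 1 1 1 kw kz kz')]"])
   apply (simp add: wrap_def T_lin e1 e2 famA_ok famR1_ok famR3_ok)
  apply (simp add: slc_def wrap_def rtt_def negf_def fmul_def fsc_def mnr_def tl1_def famA_def famR1_def famR3_def famY_def e1 e2)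
  apply (simp add: algebra_simps)
  done

lemma famY_ok22:
  assumes e1: "env kw' = env kw + eta" and e2: "env kz' = env kz + eta"
  shows "lcs (semT env) (famY env 2 2 kw kw' kz kz') v = 0"
  apply (rule cert_gen[where Is="[([],[(1,3,kw')],((1)*eta + (-1)*(env kw - env kz)),famA 2 2 2 kw kz kz'),
   ([(1,2,kw)],[],((-1)*eta + (1)*(env kw - env kz)),famA 2 3 2 kw' kz kz'),
   ([(2,2,kw)],[],((1)*eta + (-1)*(env kw - env kz)),famA 1 3 2 kw' kz kz'),
   ([],[(2,3,kw')],((-1)*eta + (1)*(env kw - env kz)),famA 1 2 2 kw kz kz')]"])
   apply (simp add: wrap_def T_lin e1 e2 famA_ok famR1_ok famR3_ok)
  apply (simp add: slc_def wrap_def rtt_def negf_def fmul_def fsc_def mnr_def tl1_def famA_def famR1_def famR3_def famY_def e1 e2)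
  apply (simp add: algebra_simps)
  done

end



definition Bf :: "nat \<Rightarrow> nat \<Rightarrow> (complex \<times> letter list) list" where
  "Bf xk yk = [(1, [(0,2,xk),(1,1,yk)]), (-1, [(0,1,xk),(1,2,yk)])]"
definition famXA :: "nat \<Rightarrow> nat \<Rightarrow> nat \<Rightarrow> nat \<Rightarrow> (complex \<times> letter list) list" where
  "famXA a b kx ky = [(1, [(0,a,kx),(1,b,ky)]), (-1, [(1,b,ky),(0,a,kx)])]"

context rttA begin

interpretation V: vector_space sc by (rule vs)

definition Uop :: "nat \<Rightarrow> complex \<Rightarrow> 'w \<Rightarrow> 'w" where
  "Uop b y = (if b = 1 then U31 sc Tc M eta y else U32 sc Tc M eta y)"

definition semA :: "(nat \<Rightarrow> complex) \<Rightarrow> letter \<Rightarrow> 'w \<Rightarrow> 'w" where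
  "semA env l = (case l of (t,i,k) \<Rightarrow> if t = 0 then T i 3 (env k) else Uop i (env k))"

definition famXX :: "(nat \<Rightarrow> complex) \<Rightarrow> nat \<Rightarrow> nat \<Rightarrow> nat \<Rightarrow> nat \<Rightarrow> (complex \<times> letter list) list" where
  "famXX env a1 a2 i j = [(env i - env j, [(0,a1,i),(0,a2,j)]), (eta, [(0,a2,i),(0,a1,j)]),
      (-(env i - env j + eta), [(0,a2,j),(0,a1,i)])]"
definition famYY :: "(nat \<Rightarrow> complex) \<Rightarrow> nat \<Rightarrow> nat \<Rightarrow> nat \<Rightarrow> nat \<Rightarrow> (complex \<times> letter list) list" where
  "famYY env b1 b2 i j = [(env i - env j, [(1,b1,i),(1,b2,j)]), (-eta, [(1,b2,i),(1,b1,j)]),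
      (-(env i - env j - eta), [(1,b2,j),(1,b1,i)])]"

lemma semA_simps: "semA env (0,i,k) = T i 3 (env k)" "semA env (Suc t,i,k) = Uop i (env k)"
  by (simp_all add: semA_def)

lemma Uop_lin: "b \<in> {1,2} \<Longrightarrow> lin_op (Uop b y)"
  unfolding Uop_def U31_def U32_def
  using qminor_lin[of 1 2 2 3 y] lin_op_uminus[OF qminor_lin[of 1 2 1 3 y]]
  by (auto simp: fun_eq_iff)

lemma semA_lin: "(t = 0 \<and> i \<in> {1,2,3}) \<or> (t \<noteq> 0 \<and> i \<in> {1,2}) \<Longrightarrow> lin_op (semA env (t,i,k))"
  by (auto simp: semA_def T_lin Uop_lin)

lemma XU_comm: assumes "a \<in> {1,2}" "b \<in> {1,2}"
  shows "T a 3 x (Uop b y p) = Uop b y (T a 3 x p)"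
proof -
  have a3: "a \<in> {1,2,3}" using assms by auto
  have "b = 1 \<or> b = 2" using assms by auto
  then show ?thesis
  proof
    assume "b = 1" then show ?thesis
      using A_exact[of a 2 3 x y p] assms by (simp add: Uop_def U31_def)
  next
    assume "b = 2" then show ?thesis
      using A_exact[of a 1 3 x y p] assms lin_opD(4)[OF T_lin[OF a3]]
      by (simp add: Uop_def U32_def)
  qed
qed

lemma famXA_ok: "a \<in> {1,2} \<Longrightarrow> b \<in> {1,2} \<Longrightarrow> lcs (semA env) (famXA a b kx ky) v = 0"
  by (simp add: famXA_def lcs_def semA_def XU_comm)

lemma famXX_ok: "a1 \<in> {1,2,3} \<Longrightarrow> a2 \<in> {1,2,3} \<Longrightarrow> lcs (semA env) (famXX env a1 a2 i j) v = 0"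
  using RTT[of a1 a2 3 3 "env i" "env j" v]
  by (simp add: famXX_def lcs_def semA_def algebra_simps)

lemma MM_rel11:
  "sc (w - z) (qminor sc Tc M eta 1 2 1 3 w (qminor sc Tc M eta 1 2 1 3 z v))
   + (sc (- eta) (qminor sc Tc M eta 1 2 1 3 w (qminor sc Tc M eta 1 2 1 3 z v))
   + sc (-(w - z - eta)) (qminor sc Tc M eta 1 2 1 3 z (qminor sc Tc M eta 1 2 1 3 w v))) = 0"
proof -
  define env where "env = (\<lambda>k::nat. if k = 0 then w else if k = 1 then w + eta else if k = 2 then z else z + eta)"
  have "lcs (semT env) (famY env 1 1 0 1 2 3) v = 0"
    by (rule famY_ok11) (simp_all add: env_def)
  then show ?thesis
    by (simp add: lcs_def famY_def fsc_def fmul_def mnr_def env_def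
        qminor_def lin_opD[OF T_lin] algebra_simps)
qed

lemma MM_rel12:
  "sc (w - z) (qminor sc Tc M eta 1 2 1 3 w (qminor sc Tc M eta 1 2 2 3 z v))
   + (sc (- eta) (qminor sc Tc M eta 1 2 2 3 w (qminor sc Tc M eta 1 2 1 3 z v))
   + sc (-(w - z - eta)) (qminor sc Tc M eta 1 2 2 3 z (qminor sc Tc M eta 1 2 1 3 w v))) = 0"
proof -
  define env where "env = (\<lambda>k::nat. if k = 0 then w else if k = 1 then w + eta else if k = 2 then z else z + eta)"
  have "lcs (semT env) (famY env 1 2 0 1 2 3) v = 0"
    by (rule famY_ok12) (simp_all add: env_def)
  then show ?thesis
    by (simp add: lcs_def famY_def fsc_def fmul_def mnr_def env_def
        qminor_def lin_opD[OF T_lin] algebra_simps)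
qed

lemma MM_rel21:
  "sc (w - z) (qminor sc Tc M eta 1 2 2 3 w (qminor sc Tc M eta 1 2 1 3 z v))
   + (sc (- eta) (qminor sc Tc M eta 1 2 1 3 w (qminor sc Tc M eta 1 2 2 3 z v))
   + sc (-(w - z - eta)) (qminor sc Tc M eta 1 2 1 3 z (qminor sc Tc M eta 1 2 2 3 w v))) = 0"
proof -
  define env where "env = (\<lambda>k::nat. if k = 0 then w else if k = 1 then w + eta else if k = 2 then z else z + eta)"
  have "lcs (semT env) (famY env 2 1 0 1 2 3) v = 0"
    by (rule famY_ok21) (simp_all add: env_def)
  then show ?thesis
    by (simp add: lcs_def famY_def fsc_def fmul_def mnr_def env_def
        qminor_def lin_opD[OF T_lin] algebra_simps)
qed

lemma MM_rel22:
  "sc (w - z) (qminor sc Tc M eta 1 2 2 3 w (qminor sc Tc M eta 1 2 2 3 z v))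
   + (sc (- eta) (qminor sc Tc M eta 1 2 2 3 w (qminor sc Tc M eta 1 2 2 3 z v))
   + sc (-(w - z - eta)) (qminor sc Tc M eta 1 2 2 3 z (qminor sc Tc M eta 1 2 2 3 w v))) = 0"
proof -
  define env where "env = (\<lambda>k::nat. if k = 0 then w else if k = 1 then w + eta else if k = 2 then z else z + eta)"
  have "lcs (semT env) (famY env 2 2 0 1 2 3) v = 0"
    by (rule famY_ok22) (simp_all add: env_def)
  then show ?thesis
    by (simp add: lcs_def famY_def fsc_def fmul_def mnr_def env_def
        qminor_def lin_opD[OF T_lin] algebra_simps)
qed

lemma YY_rel11:
  "sc (w - z) (Uop 1 w (Uop 1 z v)) + (sc (- eta) (Uop 1 w (Uop 1 z v))
   + sc (-(w - z - eta)) (Uop 1 z (Uop 1 w v))) = 0"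
  using MM_rel22[of w z v]
  by (simp add: Uop_def U31_def U32_def lin_opD[OF qminor_lin] algebra_simps)

lemma YY_rel12:
  "sc (w - z) (Uop 1 w (Uop 2 z v)) + (sc (- eta) (Uop 2 w (Uop 1 z v))
   + sc (-(w - z - eta)) (Uop 2 z (Uop 1 w v))) = 0"
  using MM_rel21[of w z v]
  by (simp add: Uop_def U31_def U32_def lin_opD[OF qminor_lin] algebra_simps)

lemma YY_rel21:
  "sc (w - z) (Uop 2 w (Uop 1 z v)) + (sc (- eta) (Uop 1 w (Uop 2 z v))
   + sc (-(w - z - eta)) (Uop 1 z (Uop 2 w v))) = 0"
  using MM_rel12[of w z v]
  by (simp add: Uop_def U31_def U32_def lin_opD[OF qminor_lin] algebra_simps)

lemma YY_rel22:
  "sc (w - z) (Uop 2 w (Uop 2 z v)) + (sc (- eta) (Uop 2 w (Uop 2 z v))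
   + sc (-(w - z - eta)) (Uop 2 z (Uop 2 w v))) = 0"
  using MM_rel11[of w z v]
  by (simp add: Uop_def U31_def U32_def lin_opD[OF qminor_lin] algebra_simps)

lemma famYY_ok: "b1 \<in> {1,2} \<Longrightarrow> b2 \<in> {1,2} \<Longrightarrow> lcs (semA env) (famYY env b1 b2 i j) v = 0"
  using YY_rel11[of "env i" "env j" v] YY_rel12[of "env i" "env j" v] YY_rel21[of "env i" "env j" v] YY_rel22[of "env i" "env j" v]
  by (auto simp: famYY_def lcs_def semA_def)

lemma lcs_fsc: "lcs s (fsc k A) p = sc k (lcs s A p)"
  by (induction A) (auto simp: lcs_def fsc_def V.scale_right_distrib)

lemma lcs_fmul: assumes "list_all (\<lambda>(c,l). list_all (\<lambda>x. lin_op (s x)) l) A"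
  shows "lcs s (fmul A B) p = lcs s A (lcs s B p)"
  using assms
proof (induction A)
  case Nil then show ?case by (simp add: fmul_def lcs_def)
next
  case (Cons a A)
  obtain c l where a: "a = (c,l)" by force
  have l: "lin_op (evs s l)" using Cons.prems a evs_lin by auto
  have "lcs s (map (\<lambda>(c2,l2). (c*c2, l@l2)) B) p = sc c (evs s l (lcs s B p))"
  proof (induction B)
    case Nil then show ?case using lin_opD(3)[OF l] by (simp add: lcs_def)
  next
    case (Cons b B)
    obtain c2 l2 where b: "b = (c2,l2)" by force
    show ?case using Cons lin_opD(1,2)[OF l] by (simp add: b lcs_def evs_append V.scale_right_distrib)
  qed
  then show ?case using Cons a by (simp add: fmul_def lcs_def)
qed

lemma final_cert:
  assumes env: "env = (\<lambda>k::nat. if k = 0 then u else if k = 1 then u - c else if k = 3 then v else v - c)"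
  shows "lcs (semA env) (fsc (2 * (u - v)) (fmul (Bf 0 1) (Bf 3 4) @ negf (fmul (Bf 3 4) (Bf 0 1)))) p = 0"
  apply (rule cert_gen[where Is="[([],[(0,2,0),(0,1,3)],((-2)),famYY env 1 2 4 1),
   ([],[(0,1,0),(0,2,3)],((-2)),famYY env 1 2 4 1),
   ([(1,2,4)],[(0,2,0)],((2)*(u - v)),famXA 1 1 3 1),
   ([],[(0,2,0),(0,2,3)],((1)),famYY env 1 1 4 1),
   ([],[(0,2,0),(0,2,3)],((1)),famYY env 1 1 1 4),
   ([(1,1,4)],[(1,2,1)],((-2)),famXX env 1 2 0 3),
   ([],[(0,2,0),(0,1,3)],((-2)),famYY env 1 2 1 4),
   ([],[(1,1,4),(1,1,1)],((1)),famXX env 2 2 3 0),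
   ([],[(1,1,4),(1,1,1)],((1)),famXX env 2 2 0 3),
   ([],[(0,1,3),(0,2,0)],((2)),famYY env 1 2 4 1),
   ([(0,2,0),(1,1,1)],[],((2)*(u - v)),famXA 2 1 3 4),
   ([(0,2,0)],[(1,1,1)],((-2)*(u - v)),famXA 2 1 3 4),
   ([],[(0,1,0),(0,1,3)],((1)),famYY env 2 2 4 1),
   ([],[(0,1,0),(0,1,3)],((1)),famYY env 2 2 1 4),
   ([],[(1,2,4),(1,2,1)],((1)),famXX env 1 1 3 0),
   ([],[(1,2,4),(1,2,1)],((1)),famXX env 1 1 0 3),
   ([(1,1,4)],[(1,2,1)],((-2)),famXX env 1 2 3 0),
   ([(0,1,0),(1,2,1)],[],((2)*(u - v)),famXA 1 2 3 4),
   ([(0,1,0)],[(1,2,1)],((-2)*(u - v)),famXA 1 2 3 4),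
   ([(0,1,0),(1,1,4)],[],((2)*(u - v)),famXA 2 2 3 1),
   ([(1,2,1),(1,1,4)],[],((2)),famXX env 2 1 0 3),
   ([(1,2,4),(1,1,1)],[],((-2)),famXX env 2 1 0 3),
   ([(1,2,1)],[(0,2,3)],((-2)*(u - v)),famXA 1 1 0 4),
   ([],[(1,1,1),(0,2,3)],((-2)*(u - v)),famXA 2 1 0 4),
   ([(0,2,0),(1,1,4)],[],((-2)*(u - v)),famXA 2 1 3 1),
   ([(0,2,3)],[(1,1,1)],((2)*(u - v)),famXA 2 1 0 4),
   ([(1,1,1)],[(0,2,3)],((2)*(u - v)),famXA 2 1 0 4),
   ([(1,1,1)],[(0,1,3)],((-2)*(u - v)),famXA 2 2 0 4),
   ([],[(0,1,3),(1,2,4)],((-2)*(u - v)),famXA 2 1 0 1),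
   ([(0,1,3),(1,2,4)],[],((2)*(u - v)),famXA 2 1 0 1),
   ([(1,1,4)],[(0,1,3)],((2)*(u - v)),famXA 2 2 0 1),
   ([],[(1,2,1),(0,1,3)],((-2)*(u - v)),famXA 1 2 0 4),
   ([(0,1,0),(1,2,4)],[],((-2)*(u - v)),famXA 1 2 3 1),
   ([],[(0,1,0),(1,2,1)],((2)*(u - v)),famXA 2 1 3 4),
   ([(0,1,3)],[(1,2,1)],((2)*(u - v)),famXA 1 2 0 4),
   ([(1,2,1)],[(0,1,3)],((2)*(u - v)),famXA 1 2 0 4),
   ([(1,1,4),(0,1,3)],[],((-2)*(u - v)),famXA 2 2 0 1),
   ([],[(1,2,1),(0,2,3)],((2)*(u - v)),famXA 1 1 0 4),
   ([(1,1,4)],[(0,2,3)],((-2)*(u - v)),famXA 2 1 0 1),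
   ([],[(1,1,4),(0,2,3)],((2)*(u - v)),famXA 2 1 0 1),
   ([(1,1,1),(0,2,0)],[],((-2)*(u - v)),famXA 1 2 3 4),
   ([(1,1,4),(0,2,0)],[],((2)*(u - v)),famXA 1 2 3 1),
   ([(1,2,4)],[(0,1,3)],((-2)*(u - v)),famXA 1 2 0 1),
   ([],[(1,2,4),(0,1,3)],((2)*(u - v)),famXA 1 2 0 1),
   ([(0,1,0),(1,2,1)],[],((-2)*(u - v)),famXA 2 1 3 4),
   ([(1,1,4)],[(0,2,0)],((-2)*(u - v)),famXA 1 2 3 1),
   ([],[(1,1,1),(0,2,0)],((2)*(u - v)),famXA 1 2 3 4),
   ([],[(1,1,4),(0,2,3)],((-2)*(u - v)),famXA 1 2 0 1),
   ([(1,1,4)],[(0,2,3)],((2)*(u - v)),famXA 1 2 0 1),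
   ([],[(0,2,3),(1,2,1)],((-2)*(u - v)),famXA 1 1 0 4)]"])
   apply (simp add: wrap_def semA_lin famXA_ok famXX_ok famYY_ok)
  apply (simp add: slc_def wrap_def negf_def fmul_def fsc_def famXA_def famXX_def famYY_def Bf_def env)
  apply (simp add: algebra_simps)
  done


lemma Bf_eval: assumes "env xk = u" "env yk = u - c"
  shows "lcs (semA env) (Bf xk yk) q = Bop sc Tc M eta c u q"
  using assms by (simp add: Bf_def lcs_def semA_def Uop_def Bop_def)

lemma Bf_lin: "list_all (\<lambda>(c,l). list_all (\<lambda>x. lin_op (semA env x)) l) (Bf xk yk)"
  by (simp add: Bf_def semA_lin)

lemma B_comm_scaled:
  "sc (2 * (u - v)) (Bop sc Tc M eta c u (Bop sc Tc M eta c v p) - Bop sc Tc M eta c v (Bop sc Tc M eta c u p)) = 0"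
proof -
  define env where "env = (\<lambda>k::nat. if k = 0 then u else if k = 1 then u - c else if k = 3 then v else v - c)"
  have "lcs (semA env) (fsc (2 * (u - v)) (fmul (Bf 0 1) (Bf 3 4) @ negf (fmul (Bf 3 4) (Bf 0 1)))) p = 0"
    by (rule final_cert) (rule env_def)
  moreover have "lcs (semA env) (Bf 0 1) q = Bop sc Tc M eta c u q" for q
    by (rule Bf_eval) (simp_all add: env_def)
  moreover have "lcs (semA env) (Bf 3 4) q = Bop sc Tc M eta c v q" for q
    by (rule Bf_eval) (simp_all add: env_def)
  ultimately show ?thesis
    by (simp add: lcs_fsc lcs_append lcs_negf lcs_fmul[OF Bf_lin])
qed

lemma B_comm: "Bop sc Tc M eta c u (Bop sc Tc M eta c v p) = Bop sc Tc M eta c v (Bop sc Tc M eta c u p)"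
proof (cases "u = v")
  case True then show ?thesis by simp
next
  case False
  then show ?thesis using B_comm_scaled[of u v c p] by simp
qed

end

theorem proposition1:
  fixes sc :: "complex \<Rightarrow> 'w::ab_group_add \<Rightarrow> 'w"
    and Tc :: "nat \<Rightarrow> nat \<Rightarrow> nat \<Rightarrow> 'w \<Rightarrow> 'w"
    and M :: nat and eta :: complex
  assumes vs: "vector_space sc"
    and lin: "\<And>a b m. a \<in> {1,2,3} \<Longrightarrow> b \<in> {1,2,3} \<Longrightarrow> m \<le> M \<Longrightarrow>
                Vector_Spaces.linear sc sc (Tc a b m)"
    and M1: "M \<ge> 1"
    and RTT: "\<And>u v a1 a2 b1 b2 w. a1 \<in> {1,2,3} \<Longrightarrow> a2 \<in> {1,2,3} \<Longrightarrow>
                b1 \<in> {1,2,3} \<Longrightarrow> b2 \<in> {1,2,3} \<Longrightarrow>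
        sc (u - v) (Tpoly sc Tc M a1 b1 u (Tpoly sc Tc M a2 b2 v w))
      + sc eta (Tpoly sc Tc M a2 b1 u (Tpoly sc Tc M a1 b2 v w))
      = sc (u - v) (Tpoly sc Tc M a2 b2 v (Tpoly sc Tc M a1 b1 u w))
      + sc eta (Tpoly sc Tc M a2 b1 v (Tpoly sc Tc M a1 b2 u w))"
  shows "\<forall>c u v. Bop sc Tc M eta c u \<circ> Bop sc Tc M eta c v
                = Bop sc Tc M eta c v \<circ> Bop sc Tc M eta c u"
  proof -
  interpret R: rttA sc Tc M eta by (rule rttA.intro[OF vs lin RTT])
  show ?thesis by (auto simp: fun_eq_iff R.B_comm)
qed

end
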